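(* For each $n$, let $H^n_{m_n}=((x^n_1,y^n_1),\dots,(x^n_{m_n},y^n_{m_n}))$ be an independent trajectory of length $m_n$ generated by the adaptive linear Gaussian sampling procedure with a sampling rule $\Lambda^n$ (which may depend on $n$), where the true coefficient vector $\beta_0\in\mathbb{R}^p$ and variance $\sigma^2>0$ are the same for all $n$. Let $\mathbf{X}_n$ be the $m_n\times p$ matrix with rows $(x^n_j)^\top$ and $\mathbf{y}_n=(y^n_1,\dots,y^n_{m_n})^\top$. Assume: (i) each $x^n_j$ is a standard basis vector, $x^n_j\in\{e_1,\dots,e_p\}$; (ii) $\lambda_{\min}(\mathbf{X}_n^\top\mathbf{X}_n)\xrightarrow{p}\infty$. Then the MLE $\hat\beta_n=(\mathbf{X}_n^\top\mathbf{X}_n)^{-1}\mathbf{X}_n^\top\mathbf{y}_n$ is consistent: $\hat\beta_n\xrightarrow{p}\beta_0$.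
   Context: Adaptive linear Gaussian sampling procedure: given a covariate sampling rule $\Lambda$ that maps any finite history $H_{j-1}=((x_1,y_1),\dots,(x_{j-1},y_{j-1}))$ to a probability distribution $\Lambda(\cdot\mid H_{j-1})$ on $\mathbb{R}^p$, a coefficient vector $\beta\in\mathbb{R}^p$ and known variance $\sigma^2>0$, set $H_0=\emptyset$ and for $j=1,2,\dots$: draw $x_j\sim\Lambda(\cdot\mid H_{j-1})$, then draw $y_j\sim\mathcal{N}(x_j^\top\beta,\sigma^2)$ conditionally on the past and $x_j$, and set $H_j=((x_1,y_1),\dots,(x_j,y_j))$. When all $x_j$ are basis vectors, $\mathbf{X}_n^\top\mathbf{X}_n$ is diagonal with $i$-th entry the number of times $e_i$ was chosen, and $\hat\beta_{n,i}$ is the sample mean of the $y$'s observed with $x=e_i$. $\lambda_{\min}$ denotes the smallest eigenvalue. *)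

theory Defs
  imports "HOL-Probability.Probability"
begin

text \<open>A trajectory of length j is represented as an extensional function
  h :: nat => (real^'p * real) on {..<j}, with h k = (x_{k+1}, y_{k+1}).
  The sampling rule is given, for each history length j, as a kernel
  Lam j from histories of length j to distributions on real^'p.
  sigma is the standard deviation (variance sigma^2).\<close>

type_synonym 'p hist = "nat \<Rightarrow> ((real^'p) \<times> real)"

definition hist_space :: "nat \<Rightarrow> 'p::finite hist measure" where
  "hist_space j = PiM {..<j} (\<lambda>_. borel)"

fun adaptive_traj ::
  "(nat \<Rightarrow> 'p::finite hist \<Rightarrow> (real^'p) measure) \<Rightarrow> real^'p \<Rightarrow> real \<Rightarrow> nat \<Rightarrow> 'p hist measure" where
  "adaptive_traj Lam \<beta> \<sigma> 0 = return (hist_space 0) (\<lambda>_. undefined)"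
| "adaptive_traj Lam \<beta> \<sigma> (Suc j) =
     adaptive_traj Lam \<beta> \<sigma> j \<bind> (\<lambda>h.
       Lam j h \<bind> (\<lambda>x.
         density lborel (normal_density (x \<bullet> \<beta>) \<sigma>) \<bind> (\<lambda>y.
           return (hist_space (Suc j)) (h(j := (x, y))))))"

text \<open>X^T X and X^T y for the design matrix with rows x_1..x_m (written out
  as sums over rows, since m varies).\<close>
definition gram :: "nat \<Rightarrow> 'p::finite hist \<Rightarrow> real^'p^'p" where
  "gram m h = (\<chi> i k. \<Sum>j<m. fst (h j) $ i * fst (h j) $ k)"

definition Xty :: "nat \<Rightarrow> 'p::finite hist \<Rightarrow> real^'p" where
  "Xty m h = (\<chi> i. \<Sum>j<m. snd (h j) * fst (h j) $ i)"

definition mle :: "nat \<Rightarrow> 'p::finite hist \<Rightarrow> real^'p" where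
  "mle m h = matrix_inv (gram m h) *v Xty m h"

definition lambda_min :: "real^'n^'n \<Rightarrow> real" where
  "lambda_min A = Min {l. \<exists>v. v \<noteq> 0 \<and> A *v v = l *\<^sub>R v}"

end

theory Submission
  imports Defs "HOL-Computational_Algebra.Polynomial"
begin

lemma pair_borel_meas:
  assumes "f \<in> N \<rightarrow>\<^sub>M borel" "g \<in> N \<rightarrow>\<^sub>M borel"
  shows "(\<lambda>w. (f w, g w)) \<in> N \<rightarrow>\<^sub>M (borel :: ('a::second_countable_topology \<times> 'b::second_countable_topology) measure)"
  using measurable_Pair[OF assms] by (simp add: borel_prod)

lemma normal_kernel:
  assumes "\<sigma> > 0"
  shows "(\<lambda>x::real^'p::finite. density lborel (normal_density (x \<bullet> \<beta>) \<sigma>)) \<in> borel \<rightarrow>\<^sub>M subprob_algebra borel"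
proof (rule measurable_subprob_algebra)
  fix x :: "real^'p" 
  show "subprob_space (density lborel (normal_density (x \<bullet> \<beta>) \<sigma>))"
    using prob_space_normal_density[OF assms] by (simp add: prob_space_imp_subprob_space)
  show "sets (density lborel (normal_density (x \<bullet> \<beta>) \<sigma>)) = sets borel" by simp
next
  fix A :: "real set" assume A: "A \<in> sets borel"
  have "(\<lambda>x::real^'p. \<integral>\<^sup>+y. ennreal (normal_density (x \<bullet> \<beta>) \<sigma> y) * indicator A y \<partial>lborel) \<in> borel_measurable borel"
    using A unfolding normal_density_def by measurable
  then show "(\<lambda>x::real^'p. emeasure (density lborel (normal_density (x \<bullet> \<beta>) \<sigma>)) A) \<in> borel_measurable borel"
    using A by (simp add: emeasure_density)
qed

definition K where
 "K Lam \<beta> \<sigma> j = (\<lambda>h. Lam j h \<bind> (\<lambda>x.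
         density lborel (normal_density (x \<bullet> \<beta>) \<sigma>) \<bind> (\<lambda>y.
           return (hist_space (Suc j)) (h(j := (x, y))))))"

lemma upd_meas:
  "(\<lambda>((h::'p::finite hist, x::real^'p), y::real). h(j := (x, y))) \<in> (hist_space j \<Otimes>\<^sub>M borel) \<Otimes>\<^sub>M borel \<rightarrow>\<^sub>M hist_space (Suc j)"
proof -
  have "(\<lambda>w::('p hist \<times> (real^'p)) \<times> real. (fst (fst w)) (j := (snd (fst w), snd w))) \<in> (hist_space j \<Otimes>\<^sub>M borel) \<Otimes>\<^sub>M borel \<rightarrow>\<^sub>M hist_space (Suc j)"
    unfolding hist_space_def
    by (rule measurable_fun_upd[where J="{..<j}"]) (auto intro!: pair_borel_meas)
  then show ?thesis by (simp add: case_prod_beta')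
qed

lemma normal_kernel_P:
  assumes "\<sigma> > 0"
  shows "(\<lambda>x::real^'p::finite. density lborel (normal_density (x \<bullet> \<beta>) \<sigma>)) \<in> borel \<rightarrow>\<^sub>M prob_algebra borel"
  by (rule measurable_prob_algebraI) (auto intro: prob_space_normal_density[OF assms] normal_kernel[OF assms])

lemma K_meas:
  assumes "\<sigma> > 0" and L: "Lam j \<in> hist_space j \<rightarrow>\<^sub>M prob_algebra borel"
  shows "K Lam \<beta> \<sigma> j \<in> hist_space j \<rightarrow>\<^sub>M prob_algebra (hist_space (Suc j))"
proof -
  note [measurable] = L normal_kernel_P[OF assms(1)] 
  have U[measurable]: "(\<lambda>w. (fst (fst w))(j := (snd (fst w), snd w))) \<in> (hist_space j \<Otimes>\<^sub>M borel) \<Otimes>\<^sub>M borel \<rightarrow>\<^sub>M hist_space (Suc j)"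
    using upd_meas[of j] by (simp add: case_prod_beta')
  show ?thesis unfolding K_def by measurable
qed

lemma traj_Suc: "adaptive_traj Lam \<beta> \<sigma> (Suc j) = adaptive_traj Lam \<beta> \<sigma> j \<bind> K Lam \<beta> \<sigma> j"
  by (simp add: K_def)

lemma traj_P:
  assumes "\<sigma> > 0" and L: "\<And>j. Lam j \<in> hist_space j \<rightarrow>\<^sub>M prob_algebra borel"
  shows "adaptive_traj Lam \<beta> \<sigma> m \<in> space (prob_algebra (hist_space m))"
proof (induction m)
  case 0
  have "(\<lambda>_. undefined) \<in> space (hist_space 0 :: 'a hist measure)"
    unfolding hist_space_def by (simp add: space_PiM)
  then show ?case by (auto intro: prob_space_return simp: space_prob_algebra)
next
  case (Suc m)
  show ?case unfolding traj_Suc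
    using measurable_bind_prob_space[OF measurable_const[OF Suc.IH] K_meas[where Lam=Lam and j=m, OF assms(1) L], THEN measurable_space, of undefined "count_space UNIV"]
    by simp
qed

lemma traj_sets:
  assumes "\<sigma> > 0" and L: "\<And>j. Lam j \<in> hist_space j \<rightarrow>\<^sub>M prob_algebra borel"
  shows "sets (adaptive_traj Lam \<beta> \<sigma> m) = sets (hist_space m)" "prob_space (adaptive_traj Lam \<beta> \<sigma> m)"
  using traj_P[OF assms, where m=m and \<beta>=\<beta>] by (auto simp: space_prob_algebra)

definition Sres :: "nat \<Rightarrow> 'p::finite hist \<Rightarrow> real^'p \<Rightarrow> 'p \<Rightarrow> real" where
  "Sres m h \<beta> i = (\<Sum>j<m. (snd (h j) - fst (h j) \<bullet> \<beta>) * fst (h j) $ i)"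
definition cnt :: "nat \<Rightarrow> 'p::finite hist \<Rightarrow> 'p \<Rightarrow> real" where
  "cnt m h i = (\<Sum>j<m. fst (h j) $ i * fst (h j) $ i)"
definition Phi :: "real \<Rightarrow> real \<Rightarrow> real^'p \<Rightarrow> nat \<Rightarrow> 'p::finite hist \<Rightarrow> 'p \<Rightarrow> real" where
  "Phi B \<sigma> \<beta> m h i = (Sres m h \<beta> i)\<^sup>2 / (cnt m h i + B)\<^sup>2 + \<sigma>\<^sup>2 / (cnt m h i + B)"

lemma comp_meas:
  assumes "k < m"
  shows "(\<lambda>h::'p::finite hist. h k) \<in> hist_space m \<rightarrow>\<^sub>M borel"
  unfolding hist_space_def using assms by (intro measurable_component_singleton) auto

lemma comp_meas2:
  assumes "k < m"
  shows "(\<lambda>h::'p::finite hist. fst (h k) $ i) \<in> borel_measurable (hist_space m)"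
    "(\<lambda>h::'p::finite hist. snd (h k)) \<in> borel_measurable (hist_space m)"
    "(\<lambda>h::'p::finite hist. fst (h k)) \<in> borel_measurable (hist_space m)"
  using comp_meas[OF assms]
  by (auto intro!: borel_measurable_continuous_on[where f="\<lambda>p. fst p $ i"]
     borel_measurable_continuous_on[where f=snd] borel_measurable_continuous_on[where f=fst] continuous_intros)

lemma Sres_meas: "(\<lambda>h. Sres m h \<beta> i) \<in> borel_measurable (hist_space m)"
  unfolding Sres_def
  by (intro borel_measurable_sum borel_measurable_times borel_measurable_diff borel_measurable_inner
      comp_meas2 measurable_const) auto

lemma cnt_meas: "(\<lambda>h. cnt m h i) \<in> borel_measurable (hist_space m)"
  unfolding cnt_def
  by (intro borel_measurable_sum borel_measurable_times comp_meas2) auto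

lemma Phi_meas: "(\<lambda>h. Phi B \<sigma> \<beta> m h i) \<in> borel_measurable (hist_space m)"
  unfolding Phi_def using Sres_meas cnt_meas by measurable

lemma Sres_upd: "Sres (Suc j) (h(j := (x, y))) \<beta> i = Sres j h \<beta> i + (y - x \<bullet> \<beta>) * x $ i"
  unfolding Sres_def by (simp add: sum.lessThan_Suc)
lemma cnt_upd: "cnt (Suc j) (h(j := (x, y))) i = cnt j h i + (x $ i)\<^sup>2"
  unfolding cnt_def by (simp add: sum.lessThan_Suc power2_eq_square)

lemma cnt_nonneg: "cnt m h i \<ge> 0"
  unfolding cnt_def by (intro sum_nonneg) auto

lemma step_ineq:
  fixes D a s \<sigma> :: real
  assumes "D > 0"
  shows "(s\<^sup>2 + \<sigma>\<^sup>2 * a\<^sup>2) / (D + a\<^sup>2)\<^sup>2 + \<sigma>\<^sup>2 / (D + a\<^sup>2) \<le> s\<^sup>2 / D\<^sup>2 + \<sigma>\<^sup>2 / D"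
proof -
  have p: "D + a\<^sup>2 > 0" using assms by (simp add: add_pos_nonneg)
  have 1: "s\<^sup>2 / (D + a\<^sup>2)\<^sup>2 \<le> s\<^sup>2 / D\<^sup>2"
    using assms p by (intro divide_left_mono power_mono) (auto intro!: mult_pos_pos)
  have 2: "\<sigma>\<^sup>2 * a\<^sup>2 / (D + a\<^sup>2)\<^sup>2 + \<sigma>\<^sup>2 / (D + a\<^sup>2) \<le> \<sigma>\<^sup>2 / D"
  proof -
    have "a\<^sup>2 / (D + a\<^sup>2)\<^sup>2 \<le> a\<^sup>2 / (D * (D + a\<^sup>2))"
      using assms p by (intro divide_left_mono) (auto simp: power2_eq_square intro!: mult_right_mono)
    also have "\<dots> = 1 / D - 1 / (D + a\<^sup>2)" using assms p by (simp add: field_simps)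
    finally have "\<sigma>\<^sup>2 * (a\<^sup>2 / (D + a\<^sup>2)\<^sup>2) \<le> \<sigma>\<^sup>2 * (1 / D - 1 / (D + a\<^sup>2))"
      by (intro mult_left_mono) auto
    then show ?thesis by (simp add: field_simps)
  qed
  show ?thesis using 1 2 by (simp add: add_divide_distrib)
qed

lemma normal_sq:
  fixes c d s a \<mu> \<sigma> :: real
  assumes "\<sigma> > 0" "c \<ge> 0" "d \<ge> 0"
  shows "(\<integral>\<^sup>+y. ennreal (c * (s + (y - \<mu>) * a)\<^sup>2 + d) \<partial>density lborel (normal_density \<mu> \<sigma>))
       = ennreal (c * (s\<^sup>2 + \<sigma>\<^sup>2 * a\<^sup>2) + d)"
proof -
  let ?n = "normal_density \<mu> \<sigma>"
  have m0: "has_bochner_integral lborel (\<lambda>y. ?n y * (y - \<mu>) ^ (2 * 0)) 1"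
    using normal_moment_even[OF assms(1), where k=0 and \<mu>=\<mu>] by simp
  have m1: "has_bochner_integral lborel (\<lambda>y. ?n y * (y - \<mu>) ^ (2 * 0 + 1)) 0"
    using normal_moment_odd[OF assms(1), where k=0 and \<mu>=\<mu>] .
  have m2: "has_bochner_integral lborel (\<lambda>y. ?n y * (y - \<mu>) ^ (2 * 1)) (\<sigma>\<^sup>2)"
    using normal_moment_even[OF assms(1), where k=1 and \<mu>=\<mu>] by simp
  have "has_bochner_integral lborel
     (\<lambda>y. (c * s\<^sup>2 + d) * (?n y * (y - \<mu>) ^ (2 * 0)) + (2 * c * s * a) * (?n y * (y - \<mu>) ^ (2 * 0 + 1))
        + (c * a\<^sup>2) * (?n y * (y - \<mu>) ^ (2 * 1)))
     ((c * s\<^sup>2 + d) * 1 + (2 * c * s * a) * 0 + (c * a\<^sup>2) * \<sigma>\<^sup>2)"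
    by (intro has_bochner_integral_add has_bochner_integral_mult_right m0 m1 m2)
  moreover have "(\<lambda>y. (c * s\<^sup>2 + d) * (?n y * (y - \<mu>) ^ (2 * 0)) + (2 * c * s * a) * (?n y * (y - \<mu>) ^ (2 * 0 + 1))
        + (c * a\<^sup>2) * (?n y * (y - \<mu>) ^ (2 * 1))) = (\<lambda>y. ?n y * (c * (s + (y - \<mu>) * a)\<^sup>2 + d))"
    by (auto simp: fun_eq_iff power2_eq_square algebra_simps)
  ultimately have H: "has_bochner_integral lborel (\<lambda>y. ?n y * (c * (s + (y - \<mu>) * a)\<^sup>2 + d)) (c * (s\<^sup>2 + \<sigma>\<^sup>2 * a\<^sup>2) + d)"
    by (simp add: algebra_simps)
  have "(\<integral>\<^sup>+y. ennreal (c * (s + (y - \<mu>) * a)\<^sup>2 + d) \<partial>density lborel ?n)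
      = (\<integral>\<^sup>+y. ennreal (?n y) * ennreal (c * (s + (y - \<mu>) * a)\<^sup>2 + d) \<partial>lborel)"
    by (subst nn_integral_density) (auto simp: normal_density_def)
  also have "\<dots> = (\<integral>\<^sup>+y. ennreal (?n y * (c * (s + (y - \<mu>) * a)\<^sup>2 + d)) \<partial>lborel)"
    using assms by (intro nn_integral_cong) (simp add: ennreal_mult normal_density_nonneg)
  also have "\<dots> = ennreal (c * (s\<^sup>2 + \<sigma>\<^sup>2 * a\<^sup>2) + d)"
    using H assms integrable.intros[OF H]
    by (subst nn_integral_eq_integral)
       (auto simp: normal_density_nonneg has_bochner_integral_integral_eq intro!: has_bochner_integral_integrable)
  finally show ?thesis .
qed

lemma Phi_meas_e: "(\<lambda>h. ennreal (Phi B \<sigma> \<beta> m h i)) \<in> borel_measurable (hist_space m)"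
  using Phi_meas by measurable

lemma meas_transfer: "f \<in> M' \<rightarrow>\<^sub>M N \<Longrightarrow> sets M = sets M' \<Longrightarrow> f \<in> M \<rightarrow>\<^sub>M N"
  using measurable_cong_sets[of M M' N N] by simp

lemma K_step:
  assumes s: "\<sigma> > 0" and B: "B > 0" and L: "Lam j \<in> hist_space j \<rightarrow>\<^sub>M prob_algebra borel"
    and h: "h \<in> space (hist_space j)"
  shows "(\<integral>\<^sup>+g. ennreal (Phi B \<sigma> \<beta> (Suc j) g i) \<partial>K Lam \<beta> \<sigma> j h) \<le> ennreal (Phi B \<sigma> \<beta> j h i)"
proof -
  have U[measurable]: "(\<lambda>w. h(j := (fst w, snd w))) \<in> (borel::(real^'a) measure) \<Otimes>\<^sub>M (borel::real measure) \<rightarrow>\<^sub>M hist_space (Suc j)"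
    unfolding hist_space_def
    by (rule measurable_fun_upd[where J="{..<j}"]) (auto intro!: pair_borel_meas measurable_const h[unfolded hist_space_def] simp: borel_prod)
  note [measurable] = normal_kernel[OF s]
  have R: "(\<lambda>x. density lborel (normal_density (x \<bullet> \<beta>) \<sigma>) \<bind> (\<lambda>y. return (hist_space (Suc j)) (h(j := (x, y)))))
     \<in> borel \<rightarrow>\<^sub>M subprob_algebra (hist_space (Suc j))"
    by measurable
  have R2: "(\<lambda>y. return (hist_space (Suc j)) (h(j := (x, y)))) \<in> borel \<rightarrow>\<^sub>M subprob_algebra (hist_space (Suc j))" for x :: "real^'a"
  proof -
    have [measurable]: "(\<lambda>y. h(j := (x, y))) \<in> borel \<rightarrow>\<^sub>M hist_space (Suc j)"
      using measurable_compose[OF measurable_Pair1'[of x borel borel] U] by simp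
    show ?thesis by measurable
  qed
  have inspace: "h(j := (x, y)) \<in> space (hist_space (Suc j))" for x y
    using measurable_space[OF U, of "(x,y)"] by (simp add: space_pair_measure)
  define D where "D = cnt j h i + B"
  have Dpos: "D > 0" unfolding D_def using cnt_nonneg[of j h i] B by linarith
  have inner: "(\<integral>\<^sup>+g. ennreal (Phi B \<sigma> \<beta> (Suc j) g i) \<partial>(density lborel (normal_density (x \<bullet> \<beta>) \<sigma>) \<bind> (\<lambda>y. return (hist_space (Suc j)) (h(j := (x, y))))))
     \<le> ennreal (Phi B \<sigma> \<beta> j h i)" for x
  proof -
    let ?s = "Sres j h \<beta> i" and ?a = "x $ i" and ?E = "D + (x $ i)\<^sup>2"
    have Epos: "?E > 0" using Dpos by (simp add: add_pos_nonneg)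
    have "(\<integral>\<^sup>+g. ennreal (Phi B \<sigma> \<beta> (Suc j) g i) \<partial>(density lborel (normal_density (x \<bullet> \<beta>) \<sigma>) \<bind> (\<lambda>y. return (hist_space (Suc j)) (h(j := (x, y))))))
       = (\<integral>\<^sup>+y. \<integral>\<^sup>+g. ennreal (Phi B \<sigma> \<beta> (Suc j) g i) \<partial>return (hist_space (Suc j)) (h(j := (x, y))) \<partial>density lborel (normal_density (x \<bullet> \<beta>) \<sigma>))"
      by (rule nn_integral_bind[OF _ meas_transfer[OF R2]]) (simp_all add: Phi_meas_e)
    also have "\<dots> = (\<integral>\<^sup>+y. ennreal (Phi B \<sigma> \<beta> (Suc j) (h(j := (x, y))) i) \<partial>density lborel (normal_density (x \<bullet> \<beta>) \<sigma>))"
      by (intro nn_integral_cong nn_integral_return inspace) (simp add: Phi_meas_e)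
    also have "\<dots> = (\<integral>\<^sup>+y. ennreal ((1 / ?E\<^sup>2) * (?s + (y - x \<bullet> \<beta>) * ?a)\<^sup>2 + \<sigma>\<^sup>2 / ?E) \<partial>density lborel (normal_density (x \<bullet> \<beta>) \<sigma>))"
      by (intro nn_integral_cong) (simp add: Phi_def Sres_upd cnt_upd D_def add.assoc add.commute add.left_commute)
    also have "\<dots> = ennreal ((1 / ?E\<^sup>2) * (?s\<^sup>2 + \<sigma>\<^sup>2 * ?a\<^sup>2) + \<sigma>\<^sup>2 / ?E)"
      by (rule normal_sq[OF s]) (use Epos in auto)
    also have "\<dots> \<le> ennreal (Phi B \<sigma> \<beta> j h i)"
      using step_ineq[OF Dpos, of ?s \<sigma> ?a] by (intro ennreal_leI) (simp add: Phi_def D_def)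
    finally show ?thesis .
  qed
  have P: "prob_space (Lam j h)" using measurable_space[OF L h] by (simp add: space_prob_algebra)
  have "(\<integral>\<^sup>+g. ennreal (Phi B \<sigma> \<beta> (Suc j) g i) \<partial>K Lam \<beta> \<sigma> j h)
     = (\<integral>\<^sup>+x. \<integral>\<^sup>+g. ennreal (Phi B \<sigma> \<beta> (Suc j) g i) \<partial>(density lborel (normal_density (x \<bullet> \<beta>) \<sigma>) \<bind> (\<lambda>y. return (hist_space (Suc j)) (h(j := (x, y))))) \<partial>Lam j h)"
    unfolding K_def
    by (rule nn_integral_bind[where B="hist_space (Suc j)"], simp add: Phi_meas_e,
        subst measurable_cong_sets[where M'=borel and N'="subprob_algebra (hist_space (Suc j))"])
       (auto intro: R simp: sets_kernel[OF measurable_prob_algebraD[OF L] h])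
  also have "\<dots> \<le> (\<integral>\<^sup>+x. ennreal (Phi B \<sigma> \<beta> j h i) \<partial>Lam j h)"
    by (intro nn_integral_mono inner)
  also have "\<dots> = ennreal (Phi B \<sigma> \<beta> j h i)"
    using P by (simp add: prob_space.emeasure_space_1)
  finally show ?thesis .
qed

lemma Phi_bound:
  assumes s: "\<sigma> > 0" and B: "B > 0" and L: "\<And>j. Lam j \<in> hist_space j \<rightarrow>\<^sub>M prob_algebra borel"
  shows "(\<integral>\<^sup>+h. ennreal (Phi B \<sigma> \<beta> m h i) \<partial>adaptive_traj Lam \<beta> \<sigma> m) \<le> ennreal (\<sigma>\<^sup>2 / B)"
proof (induction m)
  case 0
  have sp: "(\<lambda>_. undefined) \<in> space (hist_space 0 :: 'a hist measure)"
    unfolding hist_space_def by (simp add: space_PiM)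
  show ?case using sp
    by (simp add: nn_integral_return Phi_meas_e Phi_def Sres_def cnt_def)
next
  case (Suc m)
  have ST: "sets (adaptive_traj Lam \<beta> \<sigma> m) = sets (hist_space m)"
    using traj_sets[OF s L] by blast
  have KM: "K Lam \<beta> \<sigma> m \<in> adaptive_traj Lam \<beta> \<sigma> m \<rightarrow>\<^sub>M subprob_algebra (hist_space (Suc m))"
    by (rule meas_transfer[OF measurable_prob_algebraD[OF K_meas[where Lam=Lam and j=m, OF s L]] ST])
  have "(\<integral>\<^sup>+h. ennreal (Phi B \<sigma> \<beta> (Suc m) h i) \<partial>adaptive_traj Lam \<beta> \<sigma> (Suc m))
     = (\<integral>\<^sup>+h. \<integral>\<^sup>+g. ennreal (Phi B \<sigma> \<beta> (Suc m) g i) \<partial>K Lam \<beta> \<sigma> m h \<partial>adaptive_traj Lam \<beta> \<sigma> m)"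
    unfolding traj_Suc by (rule nn_integral_bind[OF Phi_meas_e KM])
  also have "\<dots> \<le> (\<integral>\<^sup>+h. ennreal (Phi B \<sigma> \<beta> m h i) \<partial>adaptive_traj Lam \<beta> \<sigma> m)"
    using sets_eq_imp_space_eq[OF ST]
    by (intro nn_integral_mono K_step[OF s B L]) auto
  also have "\<dots> \<le> ennreal (\<sigma>\<^sup>2 / B)" by (rule Suc.IH)
  finally show ?case .
qed

definition good :: "nat \<Rightarrow> 'p::finite hist \<Rightarrow> bool" where
  "good m h \<longleftrightarrow> (\<forall>j<m. \<exists>i. fst (h j) = axis i 1)"

lemma axis_prod: "axis k (1::real) $ i * axis k 1 $ i' = (if i = i' then axis k 1 $ i * axis k 1 $ i else 0)"
  by (simp add: axis_def)

lemma gram_diag: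
  assumes "good m h"
  shows "gram m h = (\<chi> i k. if i = k then cnt m h i else 0)"
proof -
  have e: "fst (h j) $ i * fst (h j) $ k = (if i = k then fst (h j) $ i * fst (h j) $ i else 0)" if "j < m" for j i k
    using assms that unfolding good_def by (metis axis_prod)
  have "gram m h $ i $ k = (if i = k then cnt m h i else 0)" for i k
  proof -
    have "gram m h $ i $ k = (\<Sum>j<m. fst (h j) $ i * fst (h j) $ k)" by (simp add: gram_def)
    also have "\<dots> = (\<Sum>j<m. if i = k then fst (h j) $ i * fst (h j) $ i else 0)"
      by (rule sum.cong[OF refl]) (rule e, simp)
    also have "\<dots> = (if i = k then cnt m h i else 0)" by (simp add: cnt_def)
    finally show ?thesis .
  qed
  then show ?thesis by (simp add: vec_eq_iff)
qed

lemma Sres_good: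
  assumes "good m h"
  shows "Sres m h \<beta> i = Xty m h $ i - \<beta> $ i * cnt m h i"
proof -
  have e: "(fst (h j) \<bullet> \<beta>) * fst (h j) $ i = \<beta> $ i * (fst (h j) $ i * fst (h j) $ i)" if jm: "j < m" for j
  proof -
    obtain k where k: "fst (h j) = axis k 1" using assms jm unfolding good_def by blast
    have "axis k 1 \<bullet> \<beta> = \<beta> $ k" by (simp add: inner_axis')
    then show ?thesis unfolding k by (simp add: axis_def)
  qed
  have "Sres m h \<beta> i = (\<Sum>j<m. snd (h j) * fst (h j) $ i) - (\<Sum>j<m. (fst (h j) \<bullet> \<beta>) * fst (h j) $ i)"
    unfolding Sres_def by (simp add: left_diff_distrib sum_subtractf)
  also have "(\<Sum>j<m. (fst (h j) \<bullet> \<beta>) * fst (h j) $ i) = (\<Sum>j<m. \<beta> $ i * (fst (h j) $ i * fst (h j) $ i))"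
    by (rule sum.cong[OF refl]) (rule e, simp)
  also have "\<dots> = \<beta> $ i * cnt m h i" by (simp add: cnt_def sum_distrib_left)
  finally show ?thesis by (simp add: Xty_def)
qed

lemma ifz1: "(if P then a else 0) * (b::real) = (if P then a * b else 0)" by simp
lemma ifz2: "(b::real) * (if P then a else 0) = (if P then b * a else 0)" by simp

definition diagm :: "('n::finite \<Rightarrow> real) \<Rightarrow> real^'n^'n" where
  "diagm c = (\<chi> i k. if i = k then c i else 0)"

lemma diagm_mult: "diagm c ** diagm d = diagm (\<lambda>i. c i * d i)"
  unfolding diagm_def matrix_matrix_mult_def vec_eq_iff
  by (auto simp: ifz1 ifz2 sum.delta)

lemma diagm_one: "diagm (\<lambda>_. 1) = mat 1"
  unfolding diagm_def mat_def vec_eq_iff by auto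

lemma matrix_inv_diagm:
  assumes "\<And>i. c i \<noteq> 0"
  shows "matrix_inv (diagm c) = diagm (\<lambda>i. 1 / c i)"
proof -
  let ?A = "diagm c" and ?D = "diagm (\<lambda>i. 1 / c i)"
  have 1: "?A ** ?D = mat 1" "?D ** ?A = mat 1"
    using assms by (simp_all add: diagm_mult diagm_one[symmetric])
  have ex: "\<exists>A'. ?A ** A' = mat 1 \<and> A' ** ?A = mat 1" using 1 by blast
  define A' where "A' = matrix_inv ?A"
  have A': "?A ** A' = mat 1 \<and> A' ** ?A = mat 1"
    unfolding A'_def matrix_inv_def by (rule someI_ex[OF ex])
  have "A' = (?D ** ?A) ** A'" using 1 by (simp add: matrix_mul_lid)
  also have "\<dots> = ?D ** (?A ** A')" by (simp add: matrix_mul_assoc)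
  also have "\<dots> = ?D" using A' by (simp add: matrix_mul_rid)
  finally show ?thesis unfolding A'_def .
qed

lemma mle_good:
  assumes "good m h" "\<And>i. cnt m h i > 0"
  shows "(mle m h - \<beta>) $ i = Sres m h \<beta> i / cnt m h i"
proof -
  have g: "gram m h = diagm (cnt m h)" using gram_diag[OF assms(1)] by (simp add: diagm_def)
  have "mle m h = diagm (\<lambda>i. 1 / cnt m h i) *v Xty m h"
    unfolding mle_def g using assms(2) by (subst matrix_inv_diagm) (auto simp: less_imp_neq[symmetric] dest: less_imp_neq[symmetric])
  then have "mle m h $ i = Xty m h $ i / cnt m h i"
    by (simp add: diagm_def matrix_vector_mult_def ifz1 ifz2 sum.delta)
  then show ?thesis
    using assms(2)[of i] by (simp add: Sres_good[OF assms(1)] field_simps)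
qed

lemma eig_diag_subset:
  "{l. \<exists>v. v \<noteq> 0 \<and> diagm c *v v = l *\<^sub>R v} \<subseteq> range c"
proof
  fix l assume "l \<in> {l. \<exists>v. v \<noteq> 0 \<and> diagm c *v v = l *\<^sub>R v}"
  then obtain v where v: "v \<noteq> 0" "diagm c *v v = l *\<^sub>R v" by blast
  obtain k where k: "v $ k \<noteq> 0" using v(1) by (metis vec_eq_iff zero_index)
  have "(diagm c *v v) $ k = c k * v $ k"
    by (simp add: diagm_def matrix_vector_mult_def ifz1 ifz2 sum.delta)
  with v(2) k have "c k = l" by simp
  then show "l \<in> range c" by blast
qed

lemma lambda_min_diag_le:
  "lambda_min (diagm c) \<le> c i"
proof -
  have "diagm c *v axis i 1 = c i *\<^sub>R axis i 1"
    by (simp add: diagm_def matrix_vector_mult_def vec_eq_iff axis_def ifz1 ifz2 sum.delta)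
  then have "c i \<in> {l. \<exists>v. v \<noteq> 0 \<and> diagm c *v v = l *\<^sub>R v}"
    by (metis (mono_tags, lifting) axis_nth mem_Collect_eq zero_index zero_neq_one)
  moreover have "finite {l. \<exists>v. v \<noteq> 0 \<and> diagm c *v v = l *\<^sub>R v}"
    by (rule finite_subset[OF eig_diag_subset]) simp
  ultimately show ?thesis unfolding lambda_min_def by (rule Min_le[rotated])
qed

lemma lambda_min_good_le:
  assumes "good m h" shows "lambda_min (gram m h) \<le> cnt m h i"
  using lambda_min_diag_le[of "cnt m h" i] gram_diag[OF assms] by (simp add: diagm_def)

definition eigs :: "real^'n::finite^'n \<Rightarrow> real set" where
  "eigs A = {l. \<exists>v. v \<noteq> 0 \<and> A *v v = l *\<^sub>R v}"

lemma det_zero_iff: "det (M::real^'n::finite^'n) = 0 \<longleftrightarrow> (\<exists>x. x \<noteq> 0 \<and> M *v x = 0)"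
  using det_eq_0_rank[of M] matrix_nonfull_linear_equations_eq[of M] rank_bound[of M] by auto

lemma shift_mult: "(A - l *\<^sub>R mat 1) *v v = A *v v - l *\<^sub>R (v::real^'n::finite)"
  by (simp add: matrix_vector_mult_diff_rdistrib scaleR_matrix_vector_assoc[symmetric])

lemma eigs_iff: "l \<in> eigs A \<longleftrightarrow> det (A - l *\<^sub>R mat 1) = 0"
proof -
  have "l \<in> eigs A \<longleftrightarrow> (\<exists>v. v \<noteq> 0 \<and> A *v v = l *\<^sub>R v)" by (simp add: eigs_def)
  also have "\<dots> \<longleftrightarrow> (\<exists>v. v \<noteq> 0 \<and> (A - l *\<^sub>R mat 1) *v v = 0)" by (simp add: shift_mult)
  also have "\<dots> \<longleftrightarrow> det (A - l *\<^sub>R mat 1) = 0" by (simp add: det_zero_iff)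
  finally show ?thesis .
qed

lemma eigs_bounded: "\<exists>K. \<forall>l\<in>eigs (A::real^'n::finite^'n). \<bar>l\<bar> \<le> K"
proof -
  have bl: "bounded_linear ((*v) A)" by (rule matrix_vector_mul_bounded_linear)
  obtain K where K: "\<And>x. norm (A *v x) \<le> norm x * K"
    using bounded_linear.bounded[OF bl] by blast
  have "\<bar>l\<bar> \<le> K" if "l \<in> eigs A" for l
  proof -
    have "\<exists>v. v \<noteq> 0 \<and> A *v v = l *\<^sub>R v" using that by (simp add: eigs_def)
    then obtain v where v: "v \<noteq> 0" "A *v v = l *\<^sub>R v" by auto
    have "norm (l *\<^sub>R v) \<le> norm v * K" using K[of v] unfolding v(2) .
    then have "\<bar>l\<bar> * norm v \<le> K * norm v" by (simp add: mult.commute)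
    moreover have "norm v > 0" using v(1) by simp
    ultimately show ?thesis by (metis mult_le_cancel_right_pos)
  qed
  then show ?thesis by blast
qed

definition cpoly :: "real^'n::finite^'n \<Rightarrow> real poly" where
  "cpoly A = (\<Sum>p\<in>{p. p permutes (UNIV::'n set)}. of_int (sign p) *
      (\<Prod>i\<in>UNIV. [: A$i$p i, - (if i = p i then 1 else 0) :]))"

lemma poly_cpoly: "poly (cpoly A) l = det (A - l *\<^sub>R mat 1)"
  unfolding cpoly_def det_def poly_sum poly_prod
  by (intro sum.cong refl) (simp add: poly_prod mat_def)

lemma eigs_finite: "finite (eigs (A::real^'n::finite^'n))"
proof -
  obtain K where K: "\<forall>l\<in>eigs A. \<bar>l\<bar> \<le> K" using eigs_bounded by blast
  have "\<bar>K + 1\<bar> > K" by linarith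
  then have "K + 1 \<notin> eigs A" using K by force
  then have "poly (cpoly A) (K + 1) \<noteq> 0" by (simp add: poly_cpoly eigs_iff)
  then have "cpoly A \<noteq> 0" by auto
  moreover have "eigs A \<subseteq> {x. poly (cpoly A) x = 0}" by (auto simp: poly_cpoly eigs_iff)
  ultimately show ?thesis using poly_roots_finite finite_subset by blast
qed

lemma det_cont: "continuous_on UNIV (\<lambda>A::real^'n::finite^'n. det A)"
  unfolding det_def by (intro continuous_intros)

lemma closed_proj:
  assumes "compact (S::real set)"
  shows "closed {A::real^'n::finite^'n. \<exists>l\<in>S. det (A - l *\<^sub>R mat 1) = 0}"
proof -
  have c: "closed {z::real \<times> (real^'n^'n). det (snd z - fst z *\<^sub>R mat 1) = 0}"
    by (rule closed_Collect_eq) (intro continuous_intros continuous_on_compose2[OF det_cont], auto)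
  have e: "{A::real^'n^'n. \<exists>l\<in>S. det (A - l *\<^sub>R mat 1) = 0} = {y. \<exists>x. x \<in> S \<and> (x, y) \<in> {z::real \<times> (real^'n^'n). det (snd z - fst z *\<^sub>R mat 1) = 0}}"
    by auto
  show ?thesis
    unfolding e by (rule closed_compact_projection[OF assms c])
qed

lemma lambda_min_le_iff:
  "lambda_min A \<le> B \<longleftrightarrow> (eigs A = {} \<and> Min ({}::real set) \<le> B) \<or> (\<exists>l\<in>eigs A. l \<le> B)"
proof (cases "eigs A = {}")
  case True
  then show ?thesis unfolding lambda_min_def eigs_def[symmetric] by simp
next
  case False
  then show ?thesis unfolding lambda_min_def eigs_def[symmetric] using eigs_finite[of A]
    by (simp add: Min_le_iff)
qed

lemma lambda_min_meas: "lambda_min \<in> borel_measurable (borel :: (real^'n::finite^'n) measure)"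
proof (subst borel_measurable_iff_le, intro allI)
  fix B :: real
  define P where "P S = {A::real^'n^'n. \<exists>l\<in>S. det (A - l *\<^sub>R mat 1) = 0}" for S
  have ex: "(\<exists>l. l \<in> S \<and> det (A - l *\<^sub>R mat 1) = 0) \<longleftrightarrow> (\<exists>N::nat. \<exists>l\<in>S \<inter> {- real N..real N}. det (A - l *\<^sub>R mat 1) = 0)"
    for A :: "real^'n^'n" and S
  proof
    assume "\<exists>l. l \<in> S \<and> det (A - l *\<^sub>R mat 1) = 0"
    then obtain l where l: "l \<in> S" "det (A - l *\<^sub>R mat 1) = 0" by blast
    obtain N :: nat where "\<bar>l\<bar> \<le> real N" using real_arch_simple by blast
    then have "l \<in> S \<inter> {- real N..real N}" using l(1) by auto
    then show "\<exists>N::nat. \<exists>l\<in>S \<inter> {- real N..real N}. det (A - l *\<^sub>R mat 1) = 0" using l(2) by blast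
  qed blast
  have C: "{A::real^'n^'n. \<exists>l\<in>eigs A. l \<le> B} = (\<Union>N::nat. P ({..B} \<inter> {- real N..real N}))"
  proof -
    have "(\<exists>l\<in>eigs A. l \<le> B) \<longleftrightarrow> (\<exists>l. l \<in> {..B} \<and> det (A - l *\<^sub>R mat 1) = 0)" for A :: "real^'n^'n"
      by (auto simp: eigs_iff)
    then have "(\<exists>l\<in>eigs A. l \<le> B) \<longleftrightarrow> (\<exists>N::nat. \<exists>l\<in>{..B} \<inter> {- real N..real N}. det (A - l *\<^sub>R mat 1) = 0)" for A :: "real^'n^'n"
      using ex[of "{..B}" A] by simp
    then show ?thesis unfolding P_def by (intro set_eqI) (simp only: mem_Collect_eq UN_iff Bex_def[of UNIV] simp_thms UNIV_I)
  qed
  have E: "{A::real^'n^'n. eigs A = {}} = - (\<Union>N::nat. P (UNIV \<inter> {- real N..real N}))"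
  proof -
    have "(eigs A = {}) \<longleftrightarrow> \<not> (\<exists>l. l \<in> UNIV \<and> det (A - l *\<^sub>R mat 1) = 0)" for A :: "real^'n^'n"
      by (auto simp: eigs_iff)
    then have "(eigs A = {}) \<longleftrightarrow> \<not> (\<exists>N::nat. \<exists>l\<in>UNIV \<inter> {- real N..real N}. det (A - l *\<^sub>R mat 1) = 0)" for A :: "real^'n^'n"
      using ex[of UNIV A] by (metis (no_types, lifting) UNIV_I)
    then show ?thesis unfolding P_def by (intro set_eqI) (simp only: mem_Collect_eq UN_iff Compl_iff Bex_def[of UNIV] simp_thms UNIV_I)
  qed
  have PS: "P (T \<inter> {a..b}) \<in> sets borel" if "closed T" for a b T
    unfolding P_def by (rule borel_closed, rule closed_proj) (use that in \<open>auto intro: compact_Int_closed\<close>)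
  have "{w \<in> space (borel :: (real^'n^'n) measure). lambda_min w \<le> B} =
     (if Min ({}::real set) \<le> B then {A. eigs A = {}} else {}) \<union> {A. \<exists>l\<in>eigs A. l \<le> B}"
    by (auto simp: lambda_min_le_iff)
  also have "\<dots> \<in> sets borel"
  proof -
    have s1: "(\<Union>N::nat. P ({..B} \<inter> {- real N..real N})) \<in> sets borel"
      using PS[of "{..B}"] by (intro sets.countable_UN) auto
    have s2: "(\<Union>N::nat. P (UNIV \<inter> {- real N..real N})) \<in> sets borel"
      using PS[of UNIV] by (intro sets.countable_UN) auto
    show ?thesis unfolding C E using s1 borel_comp[OF s2]
      by (cases "Min ({}::real set) \<le> B") (simp_all only: if_True if_False sets.Un Un_empty_left)
  qed
  finally show "{w \<in> space (borel :: (real^'n^'n) measure). lambda_min w \<le> B} \<in> sets borel" .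
qed

definition outer :: "real^'p::finite \<Rightarrow> real^'p^'p" where
  "outer x = (\<chi> i k. x $ i * x $ k)"

lemma gram_sum: "gram m h = (\<Sum>j<m. outer (fst (h j)))"
  unfolding gram_def outer_def by (simp add: vec_eq_iff)

lemma gram_meas: "gram m \<in> borel_measurable (hist_space m)"
proof -
  have "(\<lambda>h. \<Sum>j<m. outer (fst (h j))) \<in> borel_measurable (hist_space m)"
  proof (intro borel_measurable_sum)
    fix j assume "j \<in> {..<m}"
    then show "(\<lambda>h. outer (fst (h j))) \<in> borel_measurable (hist_space m)"
      unfolding outer_def
      by (intro borel_measurable_continuous_on[OF _ comp_meas2(3)] continuous_intros) auto
  qed
  then show ?thesis by (simp add: gram_sum[abs_def])
qed

lemma lmin_gram_meas: "(\<lambda>h. lambda_min (gram m h)) \<in> borel_measurable (hist_space m)"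
  using measurable_compose[OF gram_meas lambda_min_meas] .

lemma Phi_nonneg: "B > 0 \<Longrightarrow> Phi B \<sigma> \<beta> m h i \<ge> 0"
  unfolding Phi_def using cnt_nonneg[of m h i]
  by (intro add_nonneg_nonneg divide_nonneg_nonneg) auto

lemma norm_sq_vec: "(norm (v::real^'p::finite))\<^sup>2 = (\<Sum>i\<in>UNIV. (v $ i)\<^sup>2)"
  by (simp add: norm_vec_def L2_set_def sum_nonneg)

lemma point_bound:
  assumes g: "good m h" and B: "B > 0" and e: "\<epsilon> > 0" and c: "\<And>i. cnt m h i > B"
    and n: "\<epsilon> < norm (mle m h - \<beta>)"
  shows "\<epsilon>\<^sup>2 < 4 * (\<Sum>i\<in>UNIV. Phi B \<sigma> \<beta> m h i)"
proof -
  have cpos: "\<And>i. cnt m h i > 0" using c B by (metis less_trans)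
  have comp: "((mle m h - \<beta>) $ i)\<^sup>2 \<le> 4 * Phi B \<sigma> \<beta> m h i" for i
  proof -
    let ?S = "Sres m h \<beta> i" and ?c = "cnt m h i"
    have c0: "?c > 0" by (rule cpos)
    have "((mle m h - \<beta>) $ i)\<^sup>2 = ?S\<^sup>2 / ?c\<^sup>2" unfolding mle_good[OF g cpos] by (simp add: power_divide)
    also have "\<dots> \<le> 4 * (?S\<^sup>2 / (?c + B)\<^sup>2)"
    proof -
      have "(?c + B)\<^sup>2 \<le> (2 * ?c)\<^sup>2" using c[of i] B c0 by (intro power_mono) auto
      then have "(?c + B)\<^sup>2 \<le> 4 * ?c\<^sup>2" by (simp add: power_mult_distrib)
      then have "?S\<^sup>2 * (?c + B)\<^sup>2 \<le> ?S\<^sup>2 * (4 * ?c\<^sup>2)" by (intro mult_left_mono) auto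
      then show ?thesis using c0 B by (simp add: field_simps)
    qed
    also have "\<dots> \<le> 4 * Phi B \<sigma> \<beta> m h i"
      unfolding Phi_def using c0 B by (intro mult_left_mono) (auto intro!: divide_nonneg_nonneg)
    finally show ?thesis .
  qed
  have "\<epsilon>\<^sup>2 < (norm (mle m h - \<beta>))\<^sup>2" using e n by (intro power_strict_mono) auto
  also have "\<dots> = (\<Sum>i\<in>UNIV. ((mle m h - \<beta>) $ i)\<^sup>2)" by (rule norm_sq_vec)
  also have "\<dots> \<le> (\<Sum>i\<in>UNIV. 4 * Phi B \<sigma> \<beta> m h i)" by (intro sum_mono comp)
  also have "\<dots> = 4 * (\<Sum>i\<in>UNIV. Phi B \<sigma> \<beta> m h i)" by (simp add: sum_distrib_left)
  finally show ?thesis .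
qed

lemma Psi_bound:
  fixes Lam :: "nat \<Rightarrow> 'p::finite hist \<Rightarrow> (real^'p) measure"
  assumes s: "\<sigma> > 0" and B: "B > 0" and L: "\<And>j. Lam j \<in> hist_space j \<rightarrow>\<^sub>M prob_algebra borel"
  shows "(\<integral>\<^sup>+h. ennreal (\<Sum>i\<in>UNIV. Phi B \<sigma> \<beta> m h i) \<partial>adaptive_traj Lam \<beta> \<sigma> m) \<le> ennreal (real CARD('p) * (\<sigma>\<^sup>2 / B))"
proof -
  let ?T = "adaptive_traj Lam \<beta> \<sigma> m"
  have ST: "sets ?T = sets (hist_space m)" using traj_sets[OF s L] by blast
  have "(\<integral>\<^sup>+h. ennreal (\<Sum>i\<in>UNIV. Phi B \<sigma> \<beta> m h i) \<partial>?T) = (\<integral>\<^sup>+h. (\<Sum>i\<in>UNIV. ennreal (Phi B \<sigma> \<beta> m h i)) \<partial>?T)"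
    by (intro nn_integral_cong) (simp add: Phi_nonneg[OF B])
  also have "\<dots> = (\<Sum>i\<in>UNIV. \<integral>\<^sup>+h. ennreal (Phi B \<sigma> \<beta> m h i) \<partial>?T)"
    by (rule nn_integral_sum) (rule meas_transfer[OF Phi_meas_e ST])
  also have "\<dots> \<le> (\<Sum>i\<in>(UNIV::'p set). ennreal (\<sigma>\<^sup>2 / B))"
    by (intro sum_mono Phi_bound[OF s B L])
  also have "\<dots> = ennreal (real CARD('p) * (\<sigma>\<^sup>2 / B))"
  proof -
    have "(\<Sum>i\<in>(UNIV::'p set). ennreal (\<sigma>\<^sup>2 / B)) = of_nat CARD('p) * ennreal (\<sigma>\<^sup>2 / B)" by simp
    also have "\<dots> = ennreal (real CARD('p)) * ennreal (\<sigma>\<^sup>2 / B)" by (simp add: ennreal_of_nat_eq_real_of_nat)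
    also have "\<dots> = ennreal (real CARD('p) * (\<sigma>\<^sup>2 / B))" using B by (intro ennreal_mult[symmetric]) auto
    finally show ?thesis .
  qed
  finally show ?thesis .
qed

lemma main_bound:
  fixes Lam :: "nat \<Rightarrow> 'p::finite hist \<Rightarrow> (real^'p) measure"
  assumes s: "\<sigma> > 0" and B: "B > 0" and e: "\<epsilon> > 0"
    and L: "\<And>j. Lam j \<in> hist_space j \<rightarrow>\<^sub>M prob_algebra borel"
    and AEg: "AE h in adaptive_traj Lam \<beta> \<sigma> m. \<forall>j<m. \<exists>i. fst (h j) = axis i 1"
  shows "measure (adaptive_traj Lam \<beta> \<sigma> m) {h \<in> space (adaptive_traj Lam \<beta> \<sigma> m). \<epsilon> < norm (mle m h - \<beta>)}
    \<le> measure (adaptive_traj Lam \<beta> \<sigma> m) {h \<in> space (adaptive_traj Lam \<beta> \<sigma> m). lambda_min (gram m h) \<le> B}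
      + 4 / \<epsilon>\<^sup>2 * (real CARD('p) * (\<sigma>\<^sup>2 / B))"
proof -
  let ?T = "adaptive_traj Lam \<beta> \<sigma> m"
  define A where "A = {h \<in> space ?T. \<epsilon> < norm (mle m h - \<beta>)}"
  define Ls where "Ls = {h \<in> space ?T. lambda_min (gram m h) \<le> B}"
  define c where "c = 4 / \<epsilon>\<^sup>2 * (real CARD('p) * (\<sigma>\<^sup>2 / B))"
  have c0: "c \<ge> 0" unfolding c_def using B by auto
  have ST: "sets ?T = sets (hist_space m)" and P: "prob_space ?T" using traj_sets[OF s L] by blast+
  have SP: "space ?T = space (hist_space m)" using sets_eq_imp_space_eq[OF ST] .
  interpret prob_space ?T by (rule P)
  have Ls_sets: "Ls \<in> sets ?T"
    using lmin_gram_meas[of m, unfolded borel_measurable_iff_le, rule_format, of B]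
    unfolding Ls_def SP ST .
  show ?thesis
  proof (cases "A \<in> sets ?T")
    case False
    then have "measure ?T A = 0" by (simp add: measure_notin_sets)
    then show ?thesis unfolding A_def[symmetric] Ls_def[symmetric] c_def[symmetric] using c0 by simp
  next
    case True
    have pw: "AE h in ?T. indicator A h \<le> indicator Ls h + ennreal (4 / \<epsilon>\<^sup>2) * ennreal (\<Sum>i\<in>UNIV. Phi B \<sigma> \<beta> m h i)"
      using AEg
    proof eventually_elim
      case (elim h)
      have g: "good m h" using elim unfolding good_def by blast
      show ?case
      proof (cases "h \<in> A \<and> h \<notin> Ls")
        case False
        then show ?thesis by (auto split: split_indicator)
      next
        case True
        then have hs: "h \<in> space ?T" and n: "\<epsilon> < norm (mle m h - \<beta>)" and lm: "\<not> lambda_min (gram m h) \<le> B"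
          unfolding A_def Ls_def by auto
        have "cnt m h i > B" for i using lambda_min_good_le[OF g, of i] lm by linarith
        from point_bound[OF g B e this n, of \<sigma>]
        have "1 \<le> 4 / \<epsilon>\<^sup>2 * (\<Sum>i\<in>UNIV. Phi B \<sigma> \<beta> m h i)"
          using e by (simp add: field_simps)
        then have "ennreal 1 \<le> ennreal (4 / \<epsilon>\<^sup>2 * (\<Sum>i\<in>UNIV. Phi B \<sigma> \<beta> m h i))"
          by (rule ennreal_leI)
        also have "\<dots> = ennreal (4 / \<epsilon>\<^sup>2) * ennreal (\<Sum>i\<in>UNIV. Phi B \<sigma> \<beta> m h i)"
          using Phi_nonneg[OF B] by (intro ennreal_mult) (auto intro!: sum_nonneg)
        finally show ?thesis using True by (simp add: indicator_def)
      qed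
    qed
    have PsiM: "(\<lambda>h. ennreal (\<Sum>i\<in>UNIV. Phi B \<sigma> \<beta> m h i)) \<in> borel_measurable ?T"
    proof -
      have "(\<lambda>h. \<Sum>i\<in>UNIV. Phi B \<sigma> \<beta> m h i) \<in> borel_measurable (hist_space m)"
        by (intro borel_measurable_sum Phi_meas)
      then show ?thesis by (intro meas_transfer[OF _ ST] measurable_compose[OF _ measurable_ennreal])
    qed
    have "emeasure ?T A = (\<integral>\<^sup>+h. indicator A h \<partial>?T)" using True by simp
    also have "\<dots> \<le> (\<integral>\<^sup>+h. indicator Ls h + ennreal (4 / \<epsilon>\<^sup>2) * ennreal (\<Sum>i\<in>UNIV. Phi B \<sigma> \<beta> m h i) \<partial>?T)"
      by (rule nn_integral_mono_AE[OF pw])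
    also have "\<dots> = (\<integral>\<^sup>+h. indicator Ls h \<partial>?T) + ennreal (4 / \<epsilon>\<^sup>2) * (\<integral>\<^sup>+h. ennreal (\<Sum>i\<in>UNIV. Phi B \<sigma> \<beta> m h i) \<partial>?T)"
      using Ls_sets PsiM by (simp add: nn_integral_add nn_integral_cmult)
    also have "\<dots> \<le> emeasure ?T Ls + ennreal (4 / \<epsilon>\<^sup>2) * ennreal (real CARD('p) * (\<sigma>\<^sup>2 / B))"
      using Ls_sets Psi_bound[OF s B L, of \<beta> m] by (intro add_mono mult_left_mono) auto
    also have "\<dots> = ennreal (measure ?T Ls + c)"
      unfolding c_def using B e
      by (simp add: emeasure_eq_measure ennreal_mult[symmetric] ennreal_plus[symmetric] del: ennreal_plus)
    finally have "ennreal (measure ?T A) \<le> ennreal (measure ?T Ls + c)"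
      by (simp add: emeasure_eq_measure)
    then have "measure ?T A \<le> measure ?T Ls + c"
      using c0 by (subst (asm) ennreal_le_iff) auto
    then show ?thesis unfolding A_def Ls_def c_def .
  qed
qed

theorem lemma1:
  fixes Lam :: "nat \<Rightarrow> nat \<Rightarrow> 'p::finite hist \<Rightarrow> (real^'p) measure"
    and m :: "nat \<Rightarrow> nat" and \<beta>0 :: "real^'p" and \<sigma> :: real
  assumes "\<sigma> > 0"
    and "\<And>n j. Lam n j \<in> hist_space j \<rightarrow>\<^sub>M prob_algebra borel"
    and "\<And>n. AE h in adaptive_traj (Lam n) \<beta>0 \<sigma> (m n).
               \<forall>j<m n. \<exists>i. fst (h j) = axis i 1"
    and "\<And>B. (\<lambda>n. measure (adaptive_traj (Lam n) \<beta>0 \<sigma> (m n))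
               {h \<in> space (adaptive_traj (Lam n) \<beta>0 \<sigma> (m n)). lambda_min (gram (m n) h) \<le> B})
             \<longlonglongrightarrow> 0"
  shows "\<forall>\<epsilon>>0. (\<lambda>n. measure (adaptive_traj (Lam n) \<beta>0 \<sigma> (m n))
               {h \<in> space (adaptive_traj (Lam n) \<beta>0 \<sigma> (m n)). \<epsilon> < norm (mle (m n) h - \<beta>0)})
             \<longlonglongrightarrow> 0"
proof (intro allI impI)
  fix \<epsilon> :: real assume e: "\<epsilon> > 0"
  let ?A = "\<lambda>n. measure (adaptive_traj (Lam n) \<beta>0 \<sigma> (m n))
               {h \<in> space (adaptive_traj (Lam n) \<beta>0 \<sigma> (m n)). \<epsilon> < norm (mle (m n) h - \<beta>0)}"
  let ?L = "\<lambda>B n. measure (adaptive_traj (Lam n) \<beta>0 \<sigma> (m n))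
               {h \<in> space (adaptive_traj (Lam n) \<beta>0 \<sigma> (m n)). lambda_min (gram (m n) h) \<le> B}"
  show "?A \<longlonglongrightarrow> 0"
  proof (rule LIMSEQ_I)
    fix r :: real assume r: "r > 0"
    define B where "B = 8 * real CARD('p) * \<sigma>\<^sup>2 / (\<epsilon>\<^sup>2 * r)"
    have Bpos: "B > 0" unfolding B_def using assms(1) e r by simp
    have cB: "4 / \<epsilon>\<^sup>2 * (real CARD('p) * (\<sigma>\<^sup>2 / B)) = r / 2"
      unfolding B_def using assms(1) e r by (simp add: field_simps)
    obtain no where no: "\<And>n. n \<ge> no \<Longrightarrow> norm (?L B n - 0) < r / 2"
      using LIMSEQ_D[OF assms(4)[of B], of "r / 2"] r by auto
    have "norm (?A n - 0) < r" if n: "n \<ge> no" for n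
    proof -
      have "?A n \<le> ?L B n + r / 2"
        using main_bound[OF assms(1) Bpos e assms(2) assms(3)[of n]] unfolding cB .
      moreover have "?L B n < r / 2" using no[OF n] by simp
      moreover have "?A n \<ge> 0" by (rule measure_nonneg)
      ultimately show ?thesis by simp
    qed
    then show "\<exists>no. \<forall>n\<ge>no. norm (?A n - 0) < r" by blast
  qed
qed

end
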